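(* Let $\mathbb{F}$ be a field, let $A=(a_{ij})\in M_n(\mathbb{F})$, and let $S_A\colon M_n(\mathbb{F})\to M_n(\mathbb{F})$ be the Schur map $S_A(B)=A\circ B$. Then the following are equivalent: (i) $S_A$ is a nonzero homomorphism (with respect to matrix multiplication); (ii) there is an invertible diagonal matrix $\Lambda\in M_n(\mathbb{F})$ such that $S_A(X)=\Lambda X\Lambda^{-1}$ for all $X\in M_n(\mathbb{F})$; (iii) $a_{ij}=a_{ik}a_{kj}$ and $a_{ii}=1$ for all $1\le i,j,k\le n$.
   Context: $A\circ B=(a_{ij}b_{ij})$ denotes the entrywise (Schur) product of matrices over $\mathbb{F}$. *)

theory Defs
  imports "HOL-Analysis.Analysis"
begin

definition schur_prod :: "'a::field ^'n^'n \<Rightarrow> 'a^'n^'n \<Rightarrow> 'a^'n^'n" where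
  "schur_prod A B = (\<chi> i j. A $ i $ j * B $ i $ j)"

definition diagonal_mat :: "'a::zero ^'n^'n \<Rightarrow> bool" where
  "diagonal_mat L \<longleftrightarrow> (\<forall>i j. i \<noteq> j \<longrightarrow> L $ i $ j = 0)"

end

theory Submission
  imports Defs
begin

definition munit :: "'n \<Rightarrow> 'n \<Rightarrow> 'a::field^'n^'n" where
  "munit p q = (\<chi> i j. if i = p \<and> j = q then 1 else 0)"

lemma inv_props:
  fixes L :: "'a::field^'n^'n"
  assumes "invertible L"
  shows "L ** matrix_inv L = mat 1 \<and> matrix_inv L ** L = mat 1"
  using assms unfolding invertible_def matrix_inv_def by (rule someI_ex)

lemma munit_mult: "(munit i k ** munit k j :: 'a::field^'n^'n) = munit i j"
  by (simp add: munit_def matrix_matrix_mult_def vec_eq_iff if_distrib[where f="\<lambda>x. x * _"] sum.delta cong: if_cong)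

lemma schur_munit: "schur_prod A (munit p q) = (\<chi> i j. if i = p \<and> j = q then A $ p $ q else 0)"
  by (simp add: schur_prod_def munit_def vec_eq_iff)

lemma schur_munit_mult:
  fixes A :: "'a::field^'n^'n"
  shows "(schur_prod A (munit i k) ** schur_prod A (munit k j)) $ i $ j = A $ i $ k * A $ k $ j"
  by (simp add: schur_munit matrix_matrix_mult_def if_distrib[where f="\<lambda>x. x * _"] sum.delta cong: if_cong)

lemma i_iii:
  fixes A :: "'a::field^'n^'n"
  assumes hom: "\<forall>X Y. schur_prod A (X ** Y) = schur_prod A X ** schur_prod A Y"
    and nz: "\<exists>X. schur_prod A X \<noteq> 0"
  shows "\<forall>i j k. A $ i $ j = A $ i $ k * A $ k $ j \<and> A $ i $ i = 1"
proof -
  have m: "A $ i $ j = A $ i $ k * A $ k $ j" for i j k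
  proof -
    have "schur_prod A (munit i j) = schur_prod A (munit i k) ** schur_prod A (munit k j)"
      using hom munit_mult by metis
    hence "schur_prod A (munit i j) $ i $ j = A $ i $ k * A $ k $ j"
      using schur_munit_mult by metis
    thus ?thesis by (simp add: schur_munit)
  qed
  have d: "A $ i $ i = 1" for i
  proof (rule ccontr)
    assume ne: "A $ i $ i \<noteq> 1"
    have "A $ i $ i = A $ i $ i * A $ i $ i" using m by metis
    hence z: "A $ i $ i = 0" using ne
      by (metis mult_cancel_right1 mult_zero_left)
    have "A $ j $ k = 0" for j k
    proof -
      have "A $ j $ i = A $ j $ i * A $ i $ i" using m by metis
      hence "A $ j $ i = 0" using z by simp
      moreover have "A $ j $ k = A $ j $ i * A $ i $ k" using m by metis
      ultimately show ?thesis by simp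
    qed
    hence "schur_prod A X = 0" for X by (simp add: schur_prod_def vec_eq_iff)
    thus False using nz by blast
  qed
  show ?thesis using m d by blast
qed

lemma iii_ii:
  fixes A :: "'a::field^'n^'n"
  assumes h: "\<forall>i j k. A $ i $ j = A $ i $ k * A $ k $ j \<and> A $ i $ i = 1"
  shows "\<exists>L::'a^'n^'n. diagonal_mat L \<and> invertible L \<and>
                 (\<forall>X. schur_prod A X = L ** X ** matrix_inv L)"
proof -
  define k0 :: 'n where "k0 = undefined"
  define lam where "lam i = A $ i $ k0" for i
  have lnz: "lam i * A $ k0 $ i = 1" for i
  proof -
    have "A $ i $ i = A $ i $ k0 * A $ k0 $ i" "A $ i $ i = 1" using h by blast+
    thus ?thesis unfolding lam_def by simp
  qed
  have lnz': "A $ k0 $ i * lam i = 1" for i using lnz[of i] by (simp add: mult.commute)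
  have aij: "A $ i $ j = lam i * A $ k0 $ j" for i j using h unfolding lam_def by blast
  define L :: "'a^'n^'n" where "L = (\<chi> i j. if i = j then lam i else 0)"
  define M :: "'a^'n^'n" where "M = (\<chi> i j. if i = j then A $ k0 $ i else 0)"
  have LMx: "L ** M = mat 1"
    by (simp add: L_def M_def matrix_matrix_mult_def mat_def vec_eq_iff lnz
        if_distrib[where f="\<lambda>x. x * _"] sum.delta cong: if_cong)
  have MLx: "M ** L = mat 1"
    using lnz' by (simp add: L_def M_def matrix_matrix_mult_def mat_def vec_eq_iff
        if_distrib[where f="\<lambda>x. x * _"] sum.delta cong: if_cong)
  have inv: "invertible L" unfolding invertible_def using LMx MLx by blast
  have MI: "matrix_inv L = M"
  proof -
    have "matrix_inv L ** L = mat 1" using inv_props[OF inv] by blast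
    hence "matrix_inv L ** L ** M = M" by simp
    thus ?thesis by (metis LMx matrix_mul_assoc matrix_mul_rid)
  qed
  have SX: "schur_prod A X = L ** X ** M" for X
  proof -
    have LX: "L ** X = (\<chi> i j. lam i * X $ i $ j)"
      by (simp add: L_def matrix_matrix_mult_def vec_eq_iff
          if_distrib[where f="\<lambda>x. x * _"] sum.delta cong: if_cong)
    have "(\<chi> i j. lam i * X $ i $ j) ** M = (\<chi> i j. lam i * X $ i $ j * A $ k0 $ j)"
      by (simp add: M_def matrix_matrix_mult_def vec_eq_iff
          if_distrib[where f="\<lambda>x. _ * x"] sum.delta cong: if_cong)
    moreover have "A $ i $ j * X $ i $ j = lam i * X $ i $ j * A $ k0 $ j" for i j
      unfolding aij[of i j] by (simp add: ac_simps)
    ultimately have "schur_prod A X = (\<chi> i j. lam i * X $ i $ j) ** M"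
      unfolding schur_prod_def vec_eq_iff by simp
    thus ?thesis unfolding LX .
  qed
  have S: "\<forall>X. schur_prod A X = L ** X ** matrix_inv L" unfolding MI using SX by blast
  have "diagonal_mat L" by (simp add: diagonal_mat_def L_def)
  thus ?thesis using inv S by blast
qed

lemma ii_i:
  fixes A :: "'a::field^'n^'n"
  assumes "\<exists>L::'a^'n^'n. diagonal_mat L \<and> invertible L \<and>
                 (\<forall>X. schur_prod A X = L ** X ** matrix_inv L)"
  shows "(\<forall>X Y. schur_prod A (X ** Y) = schur_prod A X ** schur_prod A Y)
            \<and> (\<exists>X. schur_prod A X \<noteq> 0)"
proof -
  obtain L :: "'a^'n^'n" where inv: "invertible L" and s: "\<And>X. schur_prod A X = L ** X ** matrix_inv L"
    using assms by blast
  define N where "N = matrix_inv L"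
  have ip: "L ** N = mat 1" "N ** L = mat 1" using inv_props[OF inv] unfolding N_def by auto
  have "schur_prod A (X ** Y) = schur_prod A X ** schur_prod A Y" for X Y
  proof -
    have "L ** X ** N ** (L ** Y ** N) = L ** X ** ((N ** L) ** (Y ** N))"
      by (simp only: matrix_mul_assoc)
    also have "\<dots> = L ** (X ** Y) ** N" by (simp only: ip matrix_mul_lid matrix_mul_assoc)
    finally show ?thesis unfolding s N_def by simp
  qed
  moreover have "schur_prod A (mat 1) \<noteq> 0"
  proof -
    have "schur_prod A (mat 1) = mat 1" unfolding s N_def[symmetric] matrix_mul_rid ip by (rule refl)
    moreover have "(mat 1 :: 'a^'n^'n) \<noteq> 0"
    proof
      assume "(mat 1 :: 'a^'n^'n) = 0"
      hence "(mat 1 :: 'a^'n^'n) $ undefined $ undefined = 0" by simp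
      thus False by (simp add: mat_def)
    qed
    ultimately show ?thesis by simp
  qed
  ultimately show ?thesis by blast
qed

theorem proposition3p1:
  fixes A :: "'a::field ^'n^'n"
  shows "(((\<forall>X Y. schur_prod A (X ** Y) = schur_prod A X ** schur_prod A Y)
            \<and> (\<exists>X. schur_prod A X \<noteq> 0))
          \<longleftrightarrow> (\<exists>L::'a^'n^'n. diagonal_mat L \<and> invertible L \<and>
                 (\<forall>X. schur_prod A X = L ** X ** matrix_inv L)))
       \<and> ((\<exists>L::'a^'n^'n. diagonal_mat L \<and> invertible L \<and>
                 (\<forall>X. schur_prod A X = L ** X ** matrix_inv L))
          \<longleftrightarrow> (\<forall>i j k. A $ i $ j = A $ i $ k * A $ k $ j \<and> A $ i $ i = 1))"
proof -
  let ?P = "(\<forall>X Y. schur_prod A (X ** Y) = schur_prod A X ** schur_prod A Y) \<and> (\<exists>X. schur_prod A X \<noteq> 0)"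
  let ?Q = "\<exists>L::'a^'n^'n. diagonal_mat L \<and> invertible L \<and> (\<forall>X. schur_prod A X = L ** X ** matrix_inv L)"
  let ?R = "\<forall>i j k. A $ i $ j = A $ i $ k * A $ k $ j \<and> A $ i $ i = 1"
  have 1: "?P \<Longrightarrow> ?R" by (rule i_iii) auto
  have 2: "?R \<Longrightarrow> ?Q" by (rule iii_ii)
  have 3: "?Q \<Longrightarrow> ?P" by (rule ii_i)
  show ?thesis
  proof (rule conjI; rule iffI)
    show "?Q" if "?P" using 2[OF 1[OF that]] .
    show "?P" if "?Q" using 3[OF that] .
    show "?R" if "?Q" using 1[OF 3[OF that]] .
    show "?Q" if "?R" using 2[OF that] .
  qed
qed

end
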